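(* Let $n\geqslant 2$, let $m_1,\ldots,m_n$ be nonnegative integers, and let $A=(a_{ij})_{1\leqslant i,j\leqslant n}$ be a complex matrix. Let $P(x_1,\ldots,x_n)\in\mathbb{C}[x_1,\ldots,x_n]$ be homogeneous and suppose there is $\nu\in\{1,-1\}$ such that for all $1\leqslant i<j\leqslant n$, $$P(x_1,\ldots,x_{i-1},x_j,x_{i+1},\ldots,x_{j-1},x_i,x_{j+1},\ldots,x_n)=\nu P(x_1,\ldots,x_n).$$ Set $f(x_1,\ldots,x_n)=\|a_{ij}x_j^{m_i}\|_{1\leqslant i,j\leqslant n}\,P(x_1,\ldots,x_n)$. Then, as polynomials in $x$, $$f^*(x,\ldots,x)=P^*(x-m_1,\ldots,x-m_n)\prod_{i=1}^n (x)_{m_i}\times\begin{cases}\|A\| & \text{if } \nu=1,\\ \mathrm{per}(A) & \text{if } \nu=-1.\end{cases}$$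
   Context: $(x)_0=1$ and $(x)_r=x(x-1)\cdots(x-r+1)$ for positive integers $r$. For a polynomial $Q=\sum_{j_1,\ldots,j_n} c_{j_1,\ldots,j_n}x_1^{j_1}\cdots x_n^{j_n}\in\mathbb{C}[x_1,\ldots,x_n]$, $Q^*$ denotes the polynomial $\sum_{j_1,\ldots,j_n} c_{j_1,\ldots,j_n}(x_1)_{j_1}\cdots(x_n)_{j_n}$. For a matrix $B=(b_{ij})_{1\leqslant i,j\leqslant n}$, $\|B\|=\sum_{\sigma\in S_n}\varepsilon(\sigma)\prod_{i=1}^n b_{i,\sigma(i)}$ is its determinant and $\mathrm{per}(B)=\sum_{\sigma\in S_n}\prod_{i=1}^n b_{i,\sigma(i)}$ its permanent, where $S_n$ is the symmetric group on $\{1,\ldots,n\}$ and $\varepsilon(\sigma)$ is the sign of $\sigma$. *)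

theory Defs
  imports "HOL-Library.Poly_Mapping" "HOL-Combinatorics.Combinatorics"
    "HOL-Computational_Algebra.Polynomial"
begin

text \<open>Variable x_i of the paper (1-based) is x_(i-1) here.\<close>
type_synonym mpoly = "(nat \<Rightarrow>\<^sub>0 nat) \<Rightarrow>\<^sub>0 complex"

definition mmonom :: "(nat \<Rightarrow>\<^sub>0 nat) \<Rightarrow> complex \<Rightarrow> mpoly" where
  "mmonom \<alpha> c = Poly_Mapping.single \<alpha> c"

definition var_pow :: "complex \<Rightarrow> nat \<Rightarrow> nat \<Rightarrow> mpoly" where
  "var_pow c j k = mmonom (Poly_Mapping.single j k) c"

definition total_deg :: "(nat \<Rightarrow>\<^sub>0 nat) \<Rightarrow> nat" where
  "total_deg \<alpha> = (\<Sum>i\<in>Poly_Mapping.keys \<alpha>. Poly_Mapping.lookup \<alpha> i)"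

definition homogeneous :: "mpoly \<Rightarrow> bool" where
  "homogeneous P \<longleftrightarrow> (\<exists>d. \<forall>\<alpha>\<in>Poly_Mapping.keys P. total_deg \<alpha> = d)"

definition vars_below :: "nat \<Rightarrow> mpoly \<Rightarrow> bool" where
  "vars_below n P \<longleftrightarrow> (\<forall>\<alpha>\<in>Poly_Mapping.keys P. Poly_Mapping.keys \<alpha> \<subseteq> {0..<n})"

definition exp_perm :: "(nat \<Rightarrow> nat) \<Rightarrow> (nat \<Rightarrow>\<^sub>0 nat) \<Rightarrow> (nat \<Rightarrow>\<^sub>0 nat)" where
  "exp_perm \<tau> \<alpha> = Abs_poly_mapping (\<lambda>k. Poly_Mapping.lookup \<alpha> (\<tau> k))"

definition swap_vars :: "nat \<Rightarrow> nat \<Rightarrow> mpoly \<Rightarrow> mpoly" where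
  "swap_vars i j P = Abs_poly_mapping (\<lambda>\<beta>. Poly_Mapping.lookup P (exp_perm (Transposition.transpose i j) \<beta>))"

definition mscale :: "complex \<Rightarrow> mpoly \<Rightarrow> mpoly" where
  "mscale c P = Poly_Mapping.map (\<lambda>a. c * a) P"

definition detn :: "nat \<Rightarrow> (nat \<Rightarrow> nat \<Rightarrow> 'a::comm_ring_1) \<Rightarrow> 'a" where
  "detn n B = (\<Sum>\<sigma> | \<sigma> permutes {0..<n}. of_int (sign \<sigma>) * (\<Prod>i<n. B i (\<sigma> i)))"

definition pern :: "nat \<Rightarrow> (nat \<Rightarrow> nat \<Rightarrow> 'a::comm_ring_1) \<Rightarrow> 'a" where
  "pern n B = (\<Sum>\<sigma> | \<sigma> permutes {0..<n}. (\<Prod>i<n. B i (\<sigma> i)))"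

definition ffact_poly :: "complex poly \<Rightarrow> nat \<Rightarrow> complex poly" where
  "ffact_poly p r = (\<Prod>k<r. p - of_nat k)"

text \<open>Q^* evaluated at univariate polynomials y_0, y_1, ...:
  Q^*(y) = sum over monomials c_alpha prod_i (y_i)_(alpha_i)\<close>
definition star_eval :: "mpoly \<Rightarrow> (nat \<Rightarrow> complex poly) \<Rightarrow> complex poly" where
  "star_eval Q y = (\<Sum>\<alpha>\<in>Poly_Mapping.keys Q. smult (Poly_Mapping.lookup Q \<alpha>) (\<Prod>i\<in>Poly_Mapping.keys \<alpha>. ffact_poly (y i) (Poly_Mapping.lookup \<alpha> i)))"

end

theory Submission
  imports Defs
begin

definition mono_ff :: "(nat \<Rightarrow> complex poly) \<Rightarrow> (nat \<Rightarrow>\<^sub>0 nat) \<Rightarrow> complex poly" where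
  "mono_ff y \<alpha> = (\<Prod>i\<in>Poly_Mapping.keys \<alpha>. ffact_poly (y i) (Poly_Mapping.lookup \<alpha> i))"

lemma ffact_poly_0 [simp]: "ffact_poly p 0 = 1"
  by (simp add: ffact_poly_def)

lemma ffact_poly_add: "ffact_poly p (a + b) = ffact_poly p a * ffact_poly (p - of_nat a) b"
proof (induction b)
  case 0 then show ?case by simp
next
  case (Suc b)
  have "ffact_poly p (a + Suc b) = ffact_poly p (a + b) * (p - of_nat (a + b))"
    by (simp add: ffact_poly_def)
  also have "\<dots> = ffact_poly p a * (ffact_poly (p - of_nat a) b * (p - of_nat a - of_nat b))"
    using Suc by (simp add: algebra_simps)
  also have "\<dots> = ffact_poly p a * ffact_poly (p - of_nat a) (Suc b)"
    by (simp add: ffact_poly_def)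
  finally show ?case .
qed

lemma mono_ff_superset:
  assumes "finite S" "Poly_Mapping.keys \<alpha> \<subseteq> S"
  shows "mono_ff y \<alpha> = (\<Prod>i\<in>S. ffact_poly (y i) (Poly_Mapping.lookup \<alpha> i))"
  unfolding mono_ff_def
  by (rule prod.mono_neutral_left) (use assms in \<open>auto simp: in_keys_iff\<close>)

lemma star_eval_mono_ff:
  "star_eval Q y = (\<Sum>\<alpha>\<in>Poly_Mapping.keys Q. smult (Poly_Mapping.lookup Q \<alpha>) (mono_ff y \<alpha>))"
  unfolding star_eval_def mono_ff_def ..

lemma star_eval_superset:
  assumes "finite S" "Poly_Mapping.keys Q \<subseteq> S"
  shows "star_eval Q y = (\<Sum>\<alpha>\<in>S. smult (Poly_Mapping.lookup Q \<alpha>) (mono_ff y \<alpha>))"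
  unfolding star_eval_mono_ff
  by (rule sum.mono_neutral_left) (use assms in \<open>auto simp: in_keys_iff\<close>)

lemma star_eval_add: "star_eval (Q1 + Q2) y = star_eval Q1 y + star_eval Q2 y"
proof -
  let ?S = "Poly_Mapping.keys Q1 \<union> Poly_Mapping.keys Q2"
  have "star_eval (Q1 + Q2) y = (\<Sum>\<alpha>\<in>?S. smult (Poly_Mapping.lookup (Q1 + Q2) \<alpha>) (mono_ff y \<alpha>))"
    by (rule star_eval_superset) (use keys_add[of Q1 Q2] in auto)
  also have "\<dots> = (\<Sum>\<alpha>\<in>?S. smult (Poly_Mapping.lookup Q1 \<alpha>) (mono_ff y \<alpha>))
      + (\<Sum>\<alpha>\<in>?S. smult (Poly_Mapping.lookup Q2 \<alpha>) (mono_ff y \<alpha>))"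
    by (simp add: lookup_add smult_add_left sum.distrib)
  also have "\<dots> = star_eval Q1 y + star_eval Q2 y"
    by (subst (1 2) star_eval_superset[where S = ?S]) auto
  finally show ?thesis .
qed

lemma star_eval_zero [simp]: "star_eval 0 y = 0"
  by (simp add: star_eval_def)

lemma star_eval_sum: "star_eval (\<Sum>x\<in>X. Q x) y = (\<Sum>x\<in>X. star_eval (Q x) y)"
  by (induction X rule: infinite_finite_induct) (auto simp: star_eval_add)

lemma star_eval_single: "star_eval (Poly_Mapping.single \<alpha> c) y = smult c (mono_ff y \<alpha>)"
  by (subst star_eval_superset[where S = "{\<alpha>}"]) auto

lemma poly_mapping_monomials:
  "(Q :: mpoly) = (\<Sum>\<alpha>\<in>Poly_Mapping.keys Q. Poly_Mapping.single \<alpha> (Poly_Mapping.lookup Q \<alpha>))"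
  by (rule poly_mapping_eqI)
     (auto simp: lookup_sum lookup_single when_def in_keys_iff sum.delta)

lemma mono_ff_add:
  "mono_ff y (\<gamma> + \<alpha>) = mono_ff y \<gamma> * mono_ff (\<lambda>i. y i - of_nat (Poly_Mapping.lookup \<gamma> i)) \<alpha>"
proof -
  let ?S = "Poly_Mapping.keys \<gamma> \<union> Poly_Mapping.keys \<alpha>"
  have "mono_ff y (\<gamma> + \<alpha>) = (\<Prod>i\<in>?S. ffact_poly (y i) (Poly_Mapping.lookup (\<gamma> + \<alpha>) i))"
    by (rule mono_ff_superset) (use keys_add[of \<gamma> \<alpha>] in auto)
  also have "\<dots> = (\<Prod>i\<in>?S. ffact_poly (y i) (Poly_Mapping.lookup \<gamma> i)) *
     (\<Prod>i\<in>?S. ffact_poly (y i - of_nat (Poly_Mapping.lookup \<gamma> i)) (Poly_Mapping.lookup \<alpha> i))"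
    by (simp add: lookup_add ffact_poly_add prod.distrib)
  also have "\<dots> = mono_ff y \<gamma> * mono_ff (\<lambda>i. y i - of_nat (Poly_Mapping.lookup \<gamma> i)) \<alpha>"
    by (subst (1 2) mono_ff_superset[where S = ?S]) auto
  finally show ?thesis .
qed

lemma star_eval_single_mult:
  "star_eval (Poly_Mapping.single \<gamma> c * Q) y
   = smult c (mono_ff y \<gamma>) * star_eval Q (\<lambda>i. y i - of_nat (Poly_Mapping.lookup \<gamma> i))"
proof -
  have "Poly_Mapping.single \<gamma> c * Q = (\<Sum>\<alpha>\<in>Poly_Mapping.keys Q.
          Poly_Mapping.single (\<gamma> + \<alpha>) (c * Poly_Mapping.lookup Q \<alpha>))"
    by (subst poly_mapping_monomials[of Q]) (simp add: sum_distrib_left mult_single)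
  then have "star_eval (Poly_Mapping.single \<gamma> c * Q) y = (\<Sum>\<alpha>\<in>Poly_Mapping.keys Q.
       smult (c * Poly_Mapping.lookup Q \<alpha>) (mono_ff y (\<gamma> + \<alpha>)))"
    by (simp add: star_eval_sum star_eval_single)
  also have "\<dots> = smult c (mono_ff y \<gamma>) * star_eval Q (\<lambda>i. y i - of_nat (Poly_Mapping.lookup \<gamma> i))"
    by (simp add: star_eval_mono_ff mono_ff_add sum_distrib_left mult_ac)
  finally show ?thesis .
qed


lemma star_eval_mscale: "star_eval (mscale c P) y = smult c (star_eval P y)"
proof -
  have "mscale c P = Poly_Mapping.single 0 c * P"
    unfolding mscale_def by (rule mult_map_scale_conv_mult)
  then show ?thesis by (simp add: star_eval_single_mult mono_ff_def)
qed

lemma star_eval_cong: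
  assumes "vars_below n P" "\<And>i. i < n \<Longrightarrow> y i = z i"
  shows "star_eval P y = star_eval P z"
  unfolding star_eval_mono_ff mono_ff_def
proof (rule sum.cong[OF refl])
  fix \<alpha> assume "\<alpha> \<in> Poly_Mapping.keys P"
  then have "Poly_Mapping.keys \<alpha> \<subseteq> {0..<n}" using assms(1) by (auto simp: vars_below_def)
  then show "smult (Poly_Mapping.lookup P \<alpha>) (\<Prod>i\<in>Poly_Mapping.keys \<alpha>. ffact_poly (y i) (Poly_Mapping.lookup \<alpha> i)) =
         smult (Poly_Mapping.lookup P \<alpha>) (\<Prod>i\<in>Poly_Mapping.keys \<alpha>. ffact_poly (z i) (Poly_Mapping.lookup \<alpha> i))"
    using assms(2) by (intro arg_cong[where f = "smult _"] prod.cong) auto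
qed

lemma lookup_exp_perm:
  "Poly_Mapping.lookup (exp_perm (Transposition.transpose a b) \<beta>) k
   = Poly_Mapping.lookup \<beta> (Transposition.transpose a b k)"
proof -
  let ?t = "Transposition.transpose a b"
  have "{k. Poly_Mapping.lookup \<beta> (?t k) \<noteq> 0} = ?t -` Poly_Mapping.keys \<beta>"
    unfolding vimage_def in_keys_iff ..
  moreover have "finite (?t -` Poly_Mapping.keys \<beta>)"
    by (rule finite_vimageI) (simp_all add: inj_transpose)
  ultimately have fin: "finite {k. Poly_Mapping.lookup \<beta> (?t k) \<noteq> 0}" by simp
  show ?thesis unfolding exp_perm_def lookup_Abs_poly_mapping[OF fin] ..
qed

lemma exp_perm_invol:
  "exp_perm (Transposition.transpose a b) (exp_perm (Transposition.transpose a b) \<beta>) = \<beta>"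
  by (rule poly_mapping_eqI) (simp add: lookup_exp_perm)

lemma keys_exp_perm:
  "Poly_Mapping.keys (exp_perm (Transposition.transpose a b) \<beta>)
   = Transposition.transpose a b ` Poly_Mapping.keys \<beta>"
proof -
  note in_transpose_image_iff[of _ a b]
  then show ?thesis
    by (intro set_eqI) (simp only: in_keys_iff lookup_exp_perm)
qed

lemma lookup_swap_vars:
  "Poly_Mapping.lookup (swap_vars a b P) \<beta>
   = Poly_Mapping.lookup P (exp_perm (Transposition.transpose a b) \<beta>)"
proof -
  let ?e = "exp_perm (Transposition.transpose a b)"
  have inj: "inj ?e" by (metis exp_perm_invol injI)
  have "{\<beta>. Poly_Mapping.lookup P (?e \<beta>) \<noteq> 0} = ?e -` Poly_Mapping.keys P"
    by (auto simp: in_keys_iff)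
  moreover have "finite (?e -` Poly_Mapping.keys P)"
    by (rule finite_vimageI) (use inj in \<open>auto simp: inj_on_def\<close>)
  ultimately show ?thesis unfolding swap_vars_def by simp
qed

lemma mono_ff_exp_perm:
  "mono_ff y (exp_perm (Transposition.transpose a b) \<alpha>) = mono_ff (y \<circ> Transposition.transpose a b) \<alpha>"
proof -
  let ?t = "Transposition.transpose a b"
  have inj_t: "inj ?t" by (metis injI transpose_involutory)
  have "mono_ff y (exp_perm ?t \<alpha>) = (\<Prod>i\<in>?t ` Poly_Mapping.keys \<alpha>. ffact_poly (y i) (Poly_Mapping.lookup \<alpha> (?t i)))"
    unfolding mono_ff_def keys_exp_perm lookup_exp_perm ..
  also have "\<dots> = (\<Prod>k\<in>Poly_Mapping.keys \<alpha>. ffact_poly (y (?t k)) (Poly_Mapping.lookup \<alpha> k))"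
    by (subst prod.reindex[OF inj_on_subset[OF inj_t subset_UNIV]]) simp
  finally show ?thesis by (simp add: mono_ff_def)
qed

lemma star_eval_swap_vars:
  "star_eval (swap_vars a b P) y = star_eval P (y \<circ> Transposition.transpose a b)"
proof -
  let ?t = "Transposition.transpose a b"
  let ?e = "exp_perm ?t"
  have inj: "inj ?e" by (metis exp_perm_invol injI)
  have keys: "Poly_Mapping.keys (swap_vars a b P) = ?e ` Poly_Mapping.keys P"
  proof -
    have "x \<in> ?e ` K \<longleftrightarrow> ?e x \<in> K" for x K
      by (auto intro!: image_eqI simp: exp_perm_invol)
    then show ?thesis
      by (intro set_eqI) (simp only: in_keys_iff lookup_swap_vars)
  qed
  have "star_eval (swap_vars a b P) y = (\<Sum>\<beta>\<in>?e ` Poly_Mapping.keys P.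
      smult (Poly_Mapping.lookup P (?e \<beta>)) (mono_ff y \<beta>))"
    unfolding star_eval_mono_ff keys lookup_swap_vars ..
  also have "\<dots> = (\<Sum>\<alpha>\<in>Poly_Mapping.keys P. smult (Poly_Mapping.lookup P \<alpha>) (mono_ff y (?e \<alpha>)))"
    by (subst sum.reindex) (use inj in \<open>auto simp: inj_on_def exp_perm_invol\<close>)
  also have "\<dots> = star_eval P (y \<circ> ?t)"
    by (simp add: star_eval_mono_ff mono_ff_exp_perm)
  finally show ?thesis .
qed

lemma star_eval_permute:
  assumes "\<nu> \<in> {1, -1}"
    and sw: "\<forall>i j. i < j \<and> j < n \<longrightarrow> swap_vars i j P = mscale \<nu> P"
    and "\<tau> permutes {0..<n}"
  shows "\<forall>y. star_eval P (y \<circ> \<tau>) = smult (if \<nu> = 1 then 1 else of_int (sign \<tau>)) (star_eval P y)"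
  using assms(3) finite_atLeastLessThan
proof (induction \<tau> rule: permutes_induct)
  case id
  then show ?case by simp
next
  case (swap a b p)
  let ?t = "Transposition.transpose a b"
  have swp: "swap_vars a b P = mscale \<nu> P"
  proof (cases "a < b")
    case True then show ?thesis using sw swap.hyps by auto
  next
    case False
    then have "b < a" using swap.hyps by auto
    then have "swap_vars b a P = mscale \<nu> P" using sw swap.hyps by auto
    then show ?thesis by (simp add: swap_vars_def transpose_commute)
  qed
  have perm: "permutation p" using swap.hyps permutation_permutes by blast
  have sg: "sign (?t \<circ> p) = - sign p"
    using sign_compose[OF permutation_swap_id perm] swap.hyps by (simp add: sign_swap_id)
  show ?case
  proof
    fix y
    have "star_eval P (y \<circ> (?t \<circ> p)) = star_eval P ((y \<circ> ?t) \<circ> p)"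
      by (simp add: comp_assoc)
    also have "\<dots> = smult (if \<nu> = 1 then 1 else of_int (sign p)) (star_eval P (y \<circ> ?t))"
      using swap.IH by blast
    also have "star_eval P (y \<circ> ?t) = smult \<nu> (star_eval P y)"
      using star_eval_swap_vars[of a b P y] swp by (simp add: star_eval_mscale)
    finally show "star_eval P (y \<circ> (?t \<circ> p)) = smult (if \<nu> = 1 then 1 else of_int (sign (?t \<circ> p))) (star_eval P y)"
      using assms(1) sg by (auto simp: comp_def)
  qed
qed


lemma prod_var_pow:
  fixes k :: nat and \<sigma> :: "nat \<Rightarrow> nat"
  shows "(\<Prod>i<k. var_pow (A i (\<sigma> i)) (\<sigma> i) (m i))
   = Poly_Mapping.single (\<Sum>i<k. Poly_Mapping.single (\<sigma> i) (m i)) (\<Prod>i<k. A i (\<sigma> i))"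
  by (induction k) (simp_all add: var_pow_def mmonom_def mult_single)

lemma lookup_gam:
  fixes \<sigma> :: "nat \<Rightarrow> nat" and m :: "nat \<Rightarrow> nat"
  assumes "\<sigma> permutes {0..<n}"
  shows "Poly_Mapping.lookup (\<Sum>i<n. Poly_Mapping.single (\<sigma> i) (m i)) j
         = (if j < n then m (inv \<sigma> j) else 0)"
proof -
  have L: "Poly_Mapping.lookup (\<Sum>i<n. Poly_Mapping.single (\<sigma> i) (m i)) j
        = (\<Sum>i<n. if \<sigma> i = j then m i else 0)"
    unfolding lookup_sum lookup_single when_def by (rule refl)
  show ?thesis
  proof (cases "j < n")
    case True
    have inv: "inv \<sigma> j < n"
      using permutes_in_image[OF permutes_inv[OF assms], of j] True by simp
    have "(\<Sum>i<n. if \<sigma> i = j then m i else 0) = (\<Sum>i<n. if inv \<sigma> j = i then m i else 0)"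
    proof (rule sum.cong[OF refl])
      fix i
      have "inv \<sigma> j = i \<longleftrightarrow> \<sigma> i = j" using permutes_inv_eq[OF assms, of j i] .
      then show "(if \<sigma> i = j then m i else 0) = (if inv \<sigma> j = i then m i else 0)" by simp
    qed
    also have "\<dots> = m (inv \<sigma> j)" using inv by (simp add: sum.delta')
    finally show ?thesis using True L by simp
  next
    case False
    have "\<sigma> i \<noteq> j" if "i < n" for i
      using permutes_in_image[OF assms, of i] that False by simp
    then have "(\<Sum>i<n. if \<sigma> i = j then m i else 0) = 0" by simp
    then show ?thesis using False L by simp
  qed
qed

lemma of_int_mult_single:
  "(of_int k :: mpoly) * Poly_Mapping.single \<gamma> c = Poly_Mapping.single \<gamma> (of_int k * c)"
proof -
  have "(of_int k :: mpoly) = Poly_Mapping.single 0 (of_int k)" by simp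
  then show ?thesis by (simp del: single_of_int add: mult_single)
qed

lemma X_minus: "[:0, 1:] - (of_nat k :: complex poly) = [:- of_nat k, 1:]"
  by (simp add: of_nat_poly)

theorem theorem2p1:
  fixes n :: nat and m :: "nat \<Rightarrow> nat" and A :: "nat \<Rightarrow> nat \<Rightarrow> complex"
    and P :: mpoly and \<nu> :: complex
  assumes "n \<ge> 2"
    and "vars_below n P"
    and "homogeneous P"
    and "\<nu> \<in> {1, -1}"
    and "\<forall>i j. i < j \<and> j < n \<longrightarrow> swap_vars i j P = mscale \<nu> P"
  shows "star_eval (detn n (\<lambda>i j. var_pow (A i j) j (m i)) * P) (\<lambda>_. [:0, 1:])
         = star_eval P (\<lambda>i. [:- of_nat (m i), 1:])
           * (\<Prod>i<n. ffact_poly [:0, 1:] (m i))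
           * [:(if \<nu> = 1 then detn n A else pern n A):]"
proof -
  define X :: "complex poly" where "X = [:0, 1:]"
  define z where "z = (\<lambda>i. [:- of_nat (m i), 1:] :: complex poly)"
  define FF where "FF = (\<Prod>i<n. ffact_poly X (m i))"
  define SP where "SP = star_eval P z"
  define vs where "vs = (\<lambda>\<sigma>::nat\<Rightarrow>nat. if \<nu> = 1 then 1 else (of_int (sign \<sigma>) :: complex))"
  define gam where "gam = (\<lambda>\<sigma>::nat\<Rightarrow>nat. \<Sum>i<n. Poly_Mapping.single (\<sigma> i) (m i))"
  define c where "c = (\<lambda>\<sigma>::nat\<Rightarrow>nat. \<Prod>i<n. A i (\<sigma> i))"
  let ?S = "{\<sigma>. \<sigma> permutes {0..<n}}"
  have trm: "star_eval (of_int (sign \<sigma>) * (\<Prod>i<n. var_pow (A i (\<sigma> i)) (\<sigma> i) (m i)) * P) (\<lambda>_. X)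
      = smult (of_int (sign \<sigma>) * c \<sigma> * vs \<sigma>) (FF * SP)" if hs: "\<sigma> permutes {0..<n}" for \<sigma>
  proof -
    have inv: "inv \<sigma> permutes {0..<n}" using permutes_inv[OF hs] .
    have lk: "Poly_Mapping.lookup (gam \<sigma>) j = (if j < n then m (inv \<sigma> j) else 0)" for j
      unfolding gam_def using lookup_gam[OF hs] .
    have keys: "Poly_Mapping.keys (gam \<sigma>) \<subseteq> {0..<n}"
      using lk by (auto simp: in_keys_iff split: if_splits)
    have ff: "mono_ff (\<lambda>_. X) (gam \<sigma>) = FF"
    proof -
      have "mono_ff (\<lambda>_. X) (gam \<sigma>) = (\<Prod>j\<in>{0..<n}. ffact_poly X (m (inv \<sigma> j)))"
        by (subst mono_ff_superset[OF _ keys]) (auto simp: lk intro!: prod.cong)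
      also have "\<dots> = (\<Prod>j\<in>{0..<n}. ffact_poly X (m j))"
        using prod.permute[OF inv, of "\<lambda>j. ffact_poly X (m j)"] by (simp add: comp_def)
      finally show ?thesis by (simp add: FF_def atLeast0LessThan)
    qed
    have "star_eval P (\<lambda>i. X - of_nat (Poly_Mapping.lookup (gam \<sigma>) i)) = star_eval P (z \<circ> inv \<sigma>)"
      by (rule star_eval_cong[OF assms(2)]) (simp add: lk z_def X_def X_minus)
    also have "\<dots> = smult (vs (inv \<sigma>)) SP"
      using star_eval_permute[OF assms(4) assms(5) inv] unfolding SP_def vs_def by blast
    also have "vs (inv \<sigma>) = vs \<sigma>"
      unfolding vs_def using sign_inverse[of \<sigma>] permutation_permutes hs by auto
    finally have sh: "star_eval P (\<lambda>i. X - of_nat (Poly_Mapping.lookup (gam \<sigma>) i)) = smult (vs \<sigma>) SP" .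
    have e1: "of_int (sign \<sigma>) * (\<Prod>i<n. var_pow (A i (\<sigma> i)) (\<sigma> i) (m i))
          = Poly_Mapping.single (gam \<sigma>) (of_int (sign \<sigma>) * c \<sigma>)"
      by (simp add: prod_var_pow of_int_mult_single gam_def c_def)
    have "star_eval (of_int (sign \<sigma>) * (\<Prod>i<n. var_pow (A i (\<sigma> i)) (\<sigma> i) (m i)) * P) (\<lambda>_. X)
       = star_eval (Poly_Mapping.single (gam \<sigma>) (of_int (sign \<sigma>) * c \<sigma>) * P) (\<lambda>_. X)"
      by (simp only: e1)
    also have "\<dots> = smult (of_int (sign \<sigma>) * c \<sigma>) (mono_ff (\<lambda>_. X) (gam \<sigma>))
        * star_eval P (\<lambda>i. X - of_nat (Poly_Mapping.lookup (gam \<sigma>) i))"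
      by (rule star_eval_single_mult)
    also have "\<dots> = smult (of_int (sign \<sigma>) * c \<sigma>) FF * smult (vs \<sigma>) SP"
      by (simp only: ff sh)
    also have "\<dots> = smult (of_int (sign \<sigma>) * c \<sigma> * vs \<sigma>) (FF * SP)"
      by (simp add: mult_ac)
    finally show ?thesis .
  qed
  have "detn n (\<lambda>i j. var_pow (A i j) j (m i)) * P
      = (\<Sum>\<sigma>\<in>?S. of_int (sign \<sigma>) * (\<Prod>i<n. var_pow (A i (\<sigma> i)) (\<sigma> i) (m i)) * P)"
    unfolding detn_def by (simp add: sum_distrib_right)
  then have "star_eval (detn n (\<lambda>i j. var_pow (A i j) j (m i)) * P) (\<lambda>_. X)
      = (\<Sum>\<sigma>\<in>?S. smult (of_int (sign \<sigma>) * c \<sigma> * vs \<sigma>) (FF * SP))"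
    by (simp add: star_eval_sum trm)
  also have "\<dots> = smult (\<Sum>\<sigma>\<in>?S. of_int (sign \<sigma>) * c \<sigma> * vs \<sigma>) (FF * SP)"
    by (simp add: smult_sum)
  also have "(\<Sum>\<sigma>\<in>?S. of_int (sign \<sigma>) * c \<sigma> * vs \<sigma>) = (if \<nu> = 1 then detn n A else pern n A)"
  proof (cases "\<nu> = 1")
    case True then show ?thesis by (simp add: vs_def c_def detn_def)
  next
    case False
    have "of_int (sign \<sigma>) * c \<sigma> * of_int (sign \<sigma>) = c \<sigma>" for \<sigma>
    proof -
      have "(of_int (sign \<sigma>) :: complex) * of_int (sign \<sigma>) = of_int (sign \<sigma> * sign \<sigma>)" by (simp only: of_int_mult)
      also have "\<dots> = 1" by simp
      finally show ?thesis by (simp add: algebra_simps)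
    qed
    then have "(\<Sum>\<sigma>\<in>?S. of_int (sign \<sigma>) * c \<sigma> * vs \<sigma>) = (\<Sum>\<sigma>\<in>?S. c \<sigma>)"
      using False unfolding vs_def by (intro sum.cong) simp_all
    then show ?thesis using False by (simp add: c_def pern_def)
  qed
  finally show ?thesis
    unfolding X_def[symmetric] z_def[symmetric] FF_def[symmetric] SP_def[symmetric]
    by (simp add: mult_ac)
qed

end
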